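(* Let $\mathbf{A}=(A_{i,j})_{p\times p}$ be a deterministic symmetric $\{0,1\}$-valued matrix with zero diagonal, $\delta=\frac{2}{p(p-1)}\sum_{i<j}A_{i,j}$ its edge density, and $N=p(p-1)/2$. Let $\mathbf{Y},\mathbf{Y}_*$ be independent and identically distributed symmetric random matrices with zero diagonal, each generated as $Y_{i,j}=A_{i,j}I(\varepsilon_{i,j}=0)+I(\varepsilon_{i,j}=1)$ for $i\neq j$, where $\varepsilon_{i,j}=\varepsilon_{j,i}$, $\mathbb{P}(\varepsilon_{i,j}=1)=\alpha$, $\mathbb{P}(\varepsilon_{i,j}=0)=1-\alpha-\beta$, $\mathbb{P}(\varepsilon_{i,j}=-1)=\beta$ for all $i<j$, and $\{\varepsilon_{i,j}\}_{i<j}$ are independent. Let $\hat u_1=\frac{2}{p(p-1)}\sum_{i<j}Y_{i,j}$ and $\hat u_2=\frac{1}{p(p-1)}\sum_{i<j}|Y_{i,j,*}-Y_{i,j}|$. Define \[ \hat\beta=\frac{\hat u_2-\alpha+\hat u_1\alpha}{\hat u_1-\alpha},\qquad \hat\delta=\frac{(\hat u_1-\alpha)^2}{\hat u_1-\hat u_2-2\hat u_1\alpha+\alpha^2} \] (for use when $\alpha$ is known) and \[ \hat\alpha=\frac{\hat u_1\beta-\hat u_2}{\hat u_1+\beta-1},\qquad \hat\delta=\frac{\hat u_1^2-\hat u_1+\hat u_2}{\hat u_1+\hat u_2-2\hat u_1\beta-(1-\beta)^2} \] (for use when $\beta$ is known). Consider $p\to\infty$ (with $\mathbf{A}$, $\delta$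 and possibly $\alpha,\beta$ depending on $p$), and suppose $N_1=p(p-1)\delta\to\infty$ and $N_2=p(p-1)(1-\delta)\to\infty$. Then (i) if $\alpha$ is known and $\delta(1-\alpha-\beta)^2\ge c$ for some positive constant $c$, the first pair satisfies $\hat\beta=\beta+O_p(N^{-1/2})$ and $\hat\delta=\delta+O_p(N^{-1/2})$; (ii) if $\beta$ is known and $(1-\delta)(1-\alpha-\beta)^2\ge c$ for some positive constant $c$, the second pair satisfies $\hat\alpha=\alpha+O_p(N^{-1/2})$ and $\hat\delta=\delta+O_p(N^{-1/2})$.
   Context: $\alpha$ and $\beta$ are the error rates: $\mathbb{P}(Y_{i,j}=1\mid A_{i,j}=0)=\alpha$, $\mathbb{P}(Y_{i,j}=0\mid A_{i,j}=1)=\beta$. *)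

theory Defs
  imports "HOL-Probability.Probability"
begin

definition noise_pmf :: "real \<Rightarrow> real \<Rightarrow> int pmf" where
  "noise_pmf a b = embed_pmf (\<lambda>x. if x = 1 then a else if x = -1 then b
                                    else if x = 0 then 1 - a - b else 0)"

definition pairs :: "nat \<Rightarrow> (nat \<times> nat) set" where
  "pairs p = {(i, j). i < j \<and> j < p}"

definition obs_entry :: "real \<Rightarrow> int \<Rightarrow> real" where
  "obs_entry a e = (if e = 0 then a else 0) + (if e = 1 then 1 else 0)"

text \<open>Joint law of the two independent noise arrays (eps for Y, eps_* for Y_*),
  each with independent entries indexed by the pairs i<j.\<close>
definition noise_model :: "nat \<Rightarrow> real \<Rightarrow> real \<Rightarrow>
    (((nat \<times> nat) \<Rightarrow> int) \<times> ((nat \<times> nat) \<Rightarrow> int)) pmf" where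
  "noise_model p a b = pair_pmf (Pi_pmf (pairs p) 0 (\<lambda>_. noise_pmf a b))
                                (Pi_pmf (pairs p) 0 (\<lambda>_. noise_pmf a b))"

definition edge_density :: "nat \<Rightarrow> (nat \<Rightarrow> nat \<Rightarrow> real) \<Rightarrow> real" where
  "edge_density p A = 2 / (real p * (real p - 1)) * (\<Sum>(i, j)\<in>pairs p. A i j)"

definition u1_hat :: "nat \<Rightarrow> (nat \<Rightarrow> nat \<Rightarrow> real) \<Rightarrow> ((nat \<times> nat) \<Rightarrow> int) \<Rightarrow> real" where
  "u1_hat p A e = 2 / (real p * (real p - 1)) * (\<Sum>(i, j)\<in>pairs p. obs_entry (A i j) (e (i, j)))"

definition u2_hat :: "nat \<Rightarrow> (nat \<Rightarrow> nat \<Rightarrow> real) \<Rightarrow> ((nat \<times> nat) \<Rightarrow> int) \<Rightarrow> ((nat \<times> nat) \<Rightarrow> int) \<Rightarrow> real" where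
  "u2_hat p A e es = 1 / (real p * (real p - 1)) *
     (\<Sum>(i, j)\<in>pairs p. \<bar>obs_entry (A i j) (es (i, j)) - obs_entry (A i j) (e (i, j))\<bar>)"

definition beta_hat :: "real \<Rightarrow> real \<Rightarrow> real \<Rightarrow> real" where
  "beta_hat a u1 u2 = (u2 - a + u1 * a) / (u1 - a)"
definition delta_hat_alpha :: "real \<Rightarrow> real \<Rightarrow> real \<Rightarrow> real" where
  "delta_hat_alpha a u1 u2 = (u1 - a)^2 / (u1 - u2 - 2 * u1 * a + a^2)"

definition alpha_hat :: "real \<Rightarrow> real \<Rightarrow> real \<Rightarrow> real" where
  "alpha_hat b u1 u2 = (u1 * b - u2) / (u1 + b - 1)"
definition delta_hat_beta :: "real \<Rightarrow> real \<Rightarrow> real \<Rightarrow> real" where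
  "delta_hat_beta b u1 u2 = (u1^2 - u1 + u2) / (u1 + u2 - 2 * u1 * b - (1 - b)^2)"

definition bigOp :: "(nat \<Rightarrow> 'a pmf) \<Rightarrow> (nat \<Rightarrow> 'a \<Rightarrow> real) \<Rightarrow> (nat \<Rightarrow> real) \<Rightarrow> bool" where
  "bigOp M X r \<longleftrightarrow> (\<forall>e>0. \<exists>K>0. eventually
      (\<lambda>p. measure_pmf.prob (M p) {\<omega>. \<bar>X p \<omega>\<bar> > K * r p} \<le> e) sequentially)"

end

theory Submission
  imports Defs "HOL-Real_Asymp.Real_Asymp"
begin


lemma sum3_ennreal: "(\<Sum>x\<in>{-1,0,1::int}. ennreal (if x = 1 then a else if x = -1 then b else if x = 0 then 1 - a - b else 0)) = ennreal b + ennreal (1 - a - b) + ennreal a"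
  by (simp add: add.assoc)

lemma pmf_noise:
  assumes "a \<ge> 0" "b \<ge> 0" "a + b \<le> 1"
  shows "pmf (noise_pmf a b) x = (if x = 1 then a else if x = -1 then b
                                    else if x = 0 then 1 - a - b else 0)"
  unfolding noise_pmf_def
proof (rule pmf_embed_pmf)
  show "\<And>x. 0 \<le> (if x = 1 then a else if x = -1 then b else if x = 0 then 1 - a - b else 0)"
    using assms by auto
  have "(\<integral>\<^sup>+(x::int). ennreal (if x = 1 then a else if x = -1 then b else if x = 0 then 1 - a - b else 0) \<partial>count_space UNIV)
     = (\<Sum>x\<in>{-1,0,1::int}. ennreal (if x = 1 then a else if x = -1 then b else if x = 0 then 1 - a - b else 0))"
    by (rule nn_integral_count_space') auto
  also have "\<dots> = ennreal b + ennreal (1 - a - b) + ennreal a" by (rule sum3_ennreal)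
  also have "\<dots> = 1" using assms by (simp flip: ennreal_plus)
  finally show "(\<integral>\<^sup>+(x::int). ennreal (if x = 1 then a else if x = -1 then b else if x = 0 then 1 - a - b else 0) \<partial>count_space UNIV) = 1" .
qed

lemma set_noise:
  assumes "a \<ge> 0" "b \<ge> 0" "a + b \<le> 1"
  shows "set_pmf (noise_pmf a b) \<subseteq> {-1, 0, 1}"
  using assms by (auto simp: set_pmf_eq pmf_noise split: if_splits)

lemma exp_pair_noise:
  fixes g :: "int \<times> int \<Rightarrow> real"
  assumes "a \<ge> 0" "b \<ge> 0" "a + b \<le> 1"
  shows "measure_pmf.expectation (pair_pmf (noise_pmf a b) (noise_pmf a b)) g =
    (\<Sum>x\<in>{-1,0,1::int}. \<Sum>y\<in>{-1,0,1::int}. pmf (noise_pmf a b) x * pmf (noise_pmf a b) y * g (x, y))"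
proof -
  have "measure_pmf.expectation (pair_pmf (noise_pmf a b) (noise_pmf a b)) g =
     (\<Sum>z\<in>{-1,0,1::int} \<times> {-1,0,1::int}. pmf (pair_pmf (noise_pmf a b) (noise_pmf a b)) z *\<^sub>R g z)"
    by (rule integral_measure_pmf) (use set_noise[OF assms] in auto)
  also have "\<dots> = (\<Sum>x\<in>{-1,0,1::int}. \<Sum>y\<in>{-1,0,1::int}. pmf (noise_pmf a b) x * pmf (noise_pmf a b) y * g (x, y))"
    unfolding sum.cartesian_product by (rule sum.cong) (auto simp: pmf_pair)
  finally show ?thesis .
qed

lemma E1:
  assumes "a \<ge> 0" "b \<ge> 0" "a + b \<le> 1" "A \<in> {0,1}"
  shows "measure_pmf.expectation (pair_pmf (noise_pmf a b) (noise_pmf a b)) (\<lambda>x. obs_entry A (fst x))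
     = A * (1 - a - b) + a"
  apply (subst exp_pair_noise[OF assms(1-3)])
  apply (simp only: pmf_noise[OF assms(1-3)])
  apply (simp add: obs_entry_def)
  apply algebra
  done

lemma E2:
  assumes "a \<ge> 0" "b \<ge> 0" "a + b \<le> 1" "A \<in> {0,1}"
  shows "measure_pmf.expectation (pair_pmf (noise_pmf a b) (noise_pmf a b))
      (\<lambda>x. \<bar>obs_entry A (snd x) - obs_entry A (fst x)\<bar> / 2)
     = A * (b * (1 - b)) + (1 - A) * (a * (1 - a))"
proof -
  have "A = 0 \<or> A = 1" using assms(4) by auto
  thus ?thesis
  proof
    assume A: "A = 0"
    show ?thesis unfolding A
      apply (subst exp_pair_noise[OF assms(1-3)])
      apply (simp only: pmf_noise[OF assms(1-3)])
      apply (simp add: obs_entry_def)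
      apply algebra
      done
  next
    assume A: "A = 1"
    show ?thesis unfolding A
      apply (subst exp_pair_noise[OF assms(1-3)])
      apply (simp only: pmf_noise[OF assms(1-3)])
      apply (simp add: obs_entry_def)
      apply algebra
      done
  qed
qed
lemma pair_Pi_pmf:
  assumes "finite S"
  shows "pair_pmf (Pi_pmf S d P) (Pi_pmf S d' Q) =
     map_pmf (\<lambda>f. (\<lambda>i. fst (f i), \<lambda>i. snd (f i))) (Pi_pmf S (d, d') (\<lambda>i. pair_pmf (P i) (Q i)))"
proof (rule pmf_eqI)
  fix z :: "('a \<Rightarrow> 'b) \<times> ('a \<Rightarrow> 'c)"
  obtain f g where z: "z = (f, g)" by (cases z)
  let ?H = "\<lambda>f. (\<lambda>i. fst (f i), \<lambda>i. snd (f i))"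
  have inj: "inj ?H" by (auto simp: inj_def fun_eq_iff prod_eq_iff)
  have zH: "z = ?H (\<lambda>i. (f i, g i))" using z by simp
  have "pmf (map_pmf ?H (Pi_pmf S (d, d') (\<lambda>i. pair_pmf (P i) (Q i)))) z
      = pmf (Pi_pmf S (d, d') (\<lambda>i. pair_pmf (P i) (Q i))) (\<lambda>i. (f i, g i))"
    unfolding zH by (rule pmf_map_inj'[OF inj])
  also have "\<dots> = (if (\<forall>x. x \<notin> S \<longrightarrow> f x = d) \<and> (\<forall>x. x \<notin> S \<longrightarrow> g x = d') then
        (\<Prod>x\<in>S. pmf (P x) (f x)) * (\<Prod>x\<in>S. pmf (Q x) (g x)) else 0)"
    by (simp only: pmf_Pi[OF assms] pmf_pair prod.distrib prod.inject all_conj_distrib imp_conjR)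
  also have "\<dots> = pmf (Pi_pmf S d P) f * pmf (Pi_pmf S d' Q) g"
    by (simp only: pmf_Pi[OF assms]) auto
  finally show "pmf (pair_pmf (Pi_pmf S d P) (Pi_pmf S d' Q)) z = pmf (map_pmf ?H (Pi_pmf S (d, d') (\<lambda>i. pair_pmf (P i) (Q i)))) z"
    by (simp add: z pmf_pair)
qed
lemma hoeff:
  fixes h :: "'i \<Rightarrow> 'x \<Rightarrow> real" and t :: real
  assumes fin: "finite S" and ne: "S \<noteq> {}" and bnd: "\<And>i x. i \<in> S \<Longrightarrow> h i x \<in> {0..1}" and t: "t \<ge> 0"
  shows "measure_pmf.prob (Pi_pmf S d Q) {f. \<bar>(\<Sum>i\<in>S. h i (f i)) / card S - (\<Sum>i\<in>S. measure_pmf.expectation (Q i) (h i)) / card S\<bar> \<ge> t}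
     \<le> 2 * exp (-2 * real (card S) * t\<^sup>2)"
proof -
  have expi: "measure_pmf.expectation (Pi_pmf S d Q) (\<lambda>f. h i (f i)) = measure_pmf.expectation (Q i) (h i)" if "i \<in> S" for i
  proof -
    have "measure_pmf.expectation (Pi_pmf S d Q) (\<lambda>f. h i (f i)) = measure_pmf.expectation (map_pmf (\<lambda>f. f i) (Pi_pmf S d Q)) (h i)"
      by simp
    also have "map_pmf (\<lambda>f. f i) (Pi_pmf S d Q) = Q i" using fin that by (simp add: Pi_pmf_component)
    finally show ?thesis .
  qed
  interpret H: Hoeffding_ineq "measure_pmf (Pi_pmf S d Q)" S "\<lambda>i f. h i (f i)" "\<lambda>_. 0" "\<lambda>_. 1" "\<Sum>i\<in>S. measure_pmf.expectation (Q i) (h i)"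
  proof unfold_locales
    show "finite S" by (rule fin)
    show "prob_space.indep_vars (measure_pmf (Pi_pmf S d Q)) (\<lambda>_. borel) (\<lambda>i f. h i (f i)) S"
      by (intro prob_space.indep_vars_compose2[OF _ indep_vars_Pi_pmf[OF fin]])
         (auto simp: measure_pmf.prob_space_axioms)
    show "\<And>i. i \<in> S \<Longrightarrow> AE x in measure_pmf (Pi_pmf S d Q). h i (x i) \<in> {0..1}"
      using bnd by auto
    show "(\<Sum>i\<in>S. measure_pmf.expectation (Q i) (h i)) \<equiv> (\<Sum>i\<in>S. measure_pmf.expectation (Pi_pmf S d Q) (\<lambda>f. h i (f i)))"
      using expi by simp
  qed
  have cpos: "real (card S) > 0" using fin ne by (simp add: card_gt_0_iff)
  have "measure_pmf.prob (Pi_pmf S d Q) {x \<in> space (measure_pmf (Pi_pmf S d Q)). \<bar>(\<Sum>i\<in>S. h i (x i)) - (\<Sum>i\<in>S. measure_pmf.expectation (Q i) (h i))\<bar> \<ge> real (card S) * t}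
     \<le> 2 * exp (-2 * (real (card S) * t)\<^sup>2 / (\<Sum>i\<in>S. (1 - 0)\<^sup>2))"
    by (rule H.Hoeffding_ineq_abs_ge) (use t cpos in auto)
  also have "(\<Sum>i\<in>S. (1 - 0::real)\<^sup>2) = card S" by simp
  also have "-2 * (real (card S) * t)\<^sup>2 / card S = -2 * real (card S) * t\<^sup>2" using cpos by (simp add: power2_eq_square field_simps)
  also have "{x \<in> space (measure_pmf (Pi_pmf S d Q)). \<bar>(\<Sum>i\<in>S. h i (x i)) - (\<Sum>i\<in>S. measure_pmf.expectation (Q i) (h i))\<bar> \<ge> real (card S) * t}
     = {f. \<bar>(\<Sum>i\<in>S. h i (f i)) / card S - (\<Sum>i\<in>S. measure_pmf.expectation (Q i) (h i)) / card S\<bar> \<ge> t}"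
  proof -
    have "\<bar>u / card S - v / card S\<bar> = \<bar>u - v\<bar> / card S" for u v :: real
      using cpos by (simp add: diff_divide_distrib[symmetric])
    moreover have "(t \<le> w / card S) = (real (card S) * t \<le> w)" for w :: real
      using cpos by (simp add: field_simps)
    ultimately show ?thesis by auto
  qed
  finally show ?thesis .
qed



lemma frac_bound:
  fixes N D k t c :: real
  assumes "\<bar>N\<bar> \<le> k * t" "\<bar>D\<bar> \<ge> c / 2" "c > 0" "t \<ge> 0" "k \<ge> 0"
  shows "\<bar>N / D\<bar> \<le> 2 * k * t / c"
proof -
  have "\<bar>N / D\<bar> = \<bar>N\<bar> / \<bar>D\<bar>" by (simp add: abs_divide)
  also have "\<dots> \<le> (k * t) / (c / 2)"
    by (rule frac_le) (use assms in auto)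
  also have "\<dots> = 2 * k * t / c" by simp
  finally show ?thesis .
qed

lemma absmul_le: "\<bar>x\<bar> \<le> 1 \<Longrightarrow> \<bar>y\<bar> \<le> t \<Longrightarrow> \<bar>x * (y::real)\<bar> \<le> t"
  by (metis abs_ge_zero abs_mult mult_le_one mult.commute mult_left_le mult_mono order.trans)

context
  fixes a b d c t u1 u2 :: real
  assumes a0: "a \<ge> 0" and b0: "b \<ge> 0" and ab: "a + b \<le> 1" and d0: "0 \<le> d" and d1: "d \<le> 1"
    and c0: "c > 0" and t0: "t \<ge> 0" and tc: "t \<le> c / 8"
    and h1: "\<bar>u1 - (d * (1 - a - b) + a)\<bar> \<le> t"
    and h2: "\<bar>u2 - (d * (b * (1 - b)) + (1 - d) * (a * (1 - a)))\<bar> \<le> t"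
begin

lemma s01: "0 \<le> 1 - a - b" "1 - a - b \<le> 1" using a0 b0 ab by auto

lemma det_alpha_known:
  assumes cd: "d * (1 - a - b)^2 \<ge> c"
  shows "\<bar>beta_hat a u1 u2 - b\<bar> \<le> 10 * t / c"
    and "\<bar>delta_hat_alpha a u1 u2 - d\<bar> \<le> 10 * t / c"
proof -
  define s where "s = 1 - a - b"
  define e1 where "e1 = u1 - (d * s + a)"
  define e2 where "e2 = u2 - (d * (b * (1 - b)) + (1 - d) * (a * (1 - a)))"
  have s0: "0 \<le> s" "s \<le> 1" using s01 by (auto simp: s_def)
  have e1: "\<bar>e1\<bar> \<le> t" using h1 by (simp add: e1_def s_def)
  have e2: "\<bar>e2\<bar> \<le> t" using h2 by (simp add: e2_def)
  have u1: "u1 = d * s + a + e1" by (simp add: e1_def)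
  have u2: "u2 = d * (b * (1 - b)) + (1 - d) * (a * (1 - a)) + e2" by (simp add: e2_def)
  have css: "c \<le> d * s^2" using cd by (simp add: s_def)
  have "d * s^2 \<le> d * s" using s0 d0 by (simp add: power2_eq_square mult_left_le mult_left_mono)
  hence cs: "c \<le> d * s" using css by linarith
  have c1: "c \<le> 1" using css s0 d0 d1
    by (smt (verit, best) mult_le_one power_le_one zero_le_power2)
  have t1: "t \<le> 1/8" using tc c1 by linarith
  have Dn: "u1 - a = d * s + e1" using u1 by simp
  have Dge: "\<bar>u1 - a\<bar> \<ge> c / 2" using Dn cs e1 tc by linarith
  have num: "u2 - a + u1 * a - b * (u1 - a) = e2 + (a - b) * e1"
    unfolding u1 u2 s_def by algebra
  have ab1: "\<bar>a - b\<bar> \<le> 1" using a0 b0 ab by linarith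
  have "\<bar>u2 - a + u1 * a - b * (u1 - a)\<bar> \<le> 2 * t"
    unfolding num using e2 absmul_le[OF ab1 e1] by linarith
  hence B1: "\<bar>(u2 - a + u1 * a - b * (u1 - a)) / (u1 - a)\<bar> \<le> 2 * 2 * t / c"
    by (rule frac_bound) (use Dge c0 t0 in auto)
  have B2: "beta_hat a u1 u2 - b = (u2 - a + u1 * a - b * (u1 - a)) / (u1 - a)"
  proof -
    have nz: "u1 - a \<noteq> 0" using Dge c0 by auto
    have "(u2 - a + u1 * a - b * (u1 - a)) / (u1 - a) = (u2 - a + u1 * a) / (u1 - a) - b * (u1 - a) / (u1 - a)"
      by (rule diff_divide_distrib)
    also have "b * (u1 - a) / (u1 - a) = b" using nz by simp
    finally show ?thesis unfolding beta_hat_def by simp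
  qed
  show "\<bar>beta_hat a u1 u2 - b\<bar> \<le> 10 * t / c"
  proof -
    have "2 * 2 * t / c \<le> 10 * t / c" by (rule divide_right_mono) (use c0 t0 in auto)
    thus ?thesis unfolding B2 by (rule order.trans[OF B1])
  qed
  define E where "E = u1 - u2 - 2 * u1 * a + a^2"
  have En: "E = d * s^2 + (1 - 2 * a) * e1 - e2"
    unfolding E_def u1 u2 s_def by algebra
  have a1: "\<bar>1 - 2 * a\<bar> \<le> 1" using a0 b0 ab by linarith
  have Ee: "\<bar>(1 - 2 * a) * e1 - e2\<bar> \<le> 2 * t" using absmul_le[OF a1 e1] e2 by linarith
  have Ege: "\<bar>E\<bar> \<ge> c / 2" using En Ee css tc by linarith
  have num2: "(u1 - a)^2 - d * E = e1 * (2 * d * s + e1) - d * ((1 - 2 * a) * e1 - e2)"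
    unfolding En Dn by algebra
  have ds1: "\<bar>2 * d * s + e1\<bar> \<le> 3"
  proof -
    have "0 \<le> d * s" "d * s \<le> 1" using d0 d1 s0 by (auto simp: mult_le_one)
    thus ?thesis using e1 t1 by linarith
  qed
  have "\<bar>e1 * (2 * d * s + e1)\<bar> \<le> 3 * t"
  proof -
    have "\<bar>e1 * (2 * d * s + e1)\<bar> = \<bar>e1\<bar> * \<bar>2 * d * s + e1\<bar>" by (simp add: abs_mult)
    also have "\<dots> \<le> t * 3" by (rule mult_mono) (use e1 ds1 t0 in auto)
    finally show ?thesis by simp
  qed
  moreover have "\<bar>d * ((1 - 2 * a) * e1 - e2)\<bar> \<le> 2 * t"
    by (rule absmul_le) (use d0 d1 Ee in auto)
  ultimately have "\<bar>(u1 - a)^2 - d * E\<bar> \<le> 5 * t" unfolding num2 by linarith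
  hence "\<bar>((u1 - a)^2 - d * E) / E\<bar> \<le> 2 * 5 * t / c"
    by (rule frac_bound) (use Ege c0 t0 in auto)
  moreover have "delta_hat_alpha a u1 u2 - d = ((u1 - a)^2 - d * E) / E"
  proof -
    have nz: "E \<noteq> 0" using Ege c0 by auto
    have "((u1 - a)^2 - d * E) / E = (u1 - a)^2 / E - d * E / E"
      by (rule diff_divide_distrib)
    also have "d * E / E = d" using nz by simp
    finally show ?thesis unfolding delta_hat_alpha_def E_def by simp
  qed
  ultimately show "\<bar>delta_hat_alpha a u1 u2 - d\<bar> \<le> 10 * t / c" by simp
qed

lemma det_beta_known:
  assumes cd: "(1 - d) * (1 - a - b)^2 \<ge> c"
  shows "\<bar>alpha_hat b u1 u2 - a\<bar> \<le> 10 * t / c"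
    and "\<bar>delta_hat_beta b u1 u2 - d\<bar> \<le> 10 * t / c"
proof -
  define s where "s = 1 - a - b"
  define e1 where "e1 = u1 - (d * s + a)"
  define e2 where "e2 = u2 - (d * (b * (1 - b)) + (1 - d) * (a * (1 - a)))"
  have s0: "0 \<le> s" "s \<le> 1" using s01 by (auto simp: s_def)
  have e1: "\<bar>e1\<bar> \<le> t" using h1 by (simp add: e1_def s_def)
  have e2: "\<bar>e2\<bar> \<le> t" using h2 by (simp add: e2_def)
  have u1: "u1 = d * s + a + e1" by (simp add: e1_def)
  have u2: "u2 = d * (b * (1 - b)) + (1 - d) * (a * (1 - a)) + e2" by (simp add: e2_def)
  have css: "c \<le> (1 - d) * s^2" using cd by (simp add: s_def)
  have "(1 - d) * s^2 \<le> (1 - d) * s" using s0 d1 by (simp add: power2_eq_square mult_left_le mult_left_mono)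
  hence cs: "c \<le> (1 - d) * s" using css by linarith
  have c1: "c \<le> 1" using css s0 d0 d1
    by (smt (verit, best) mult_le_one power_le_one zero_le_power2)
  have t1: "t \<le> 1/8" using tc c1 by linarith
  have Dn: "u1 + b - 1 = - ((1 - d) * s) + e1" unfolding u1 s_def by algebra
  have Dge: "\<bar>u1 + b - 1\<bar> \<ge> c / 2" using Dn cs e1 tc by linarith
  have num: "u1 * b - u2 - a * (u1 + b - 1) = (b - a) * e1 - e2"
    unfolding u1 u2 s_def by algebra
  have ab1: "\<bar>b - a\<bar> \<le> 1" using a0 b0 ab by linarith
  have "\<bar>u1 * b - u2 - a * (u1 + b - 1)\<bar> \<le> 2 * t"
    unfolding num using e2 absmul_le[OF ab1 e1] by linarith
  hence B1: "\<bar>(u1 * b - u2 - a * (u1 + b - 1)) / (u1 + b - 1)\<bar> \<le> 2 * 2 * t / c"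
    by (rule frac_bound) (use Dge c0 t0 in auto)
  have B2: "alpha_hat b u1 u2 - a = (u1 * b - u2 - a * (u1 + b - 1)) / (u1 + b - 1)"
  proof -
    have nz: "u1 + b - 1 \<noteq> 0" using Dge c0 by auto
    have "(u1 * b - u2 - a * (u1 + b - 1)) / (u1 + b - 1) = (u1 * b - u2) / (u1 + b - 1) - a * (u1 + b - 1) / (u1 + b - 1)"
      by (rule diff_divide_distrib)
    also have "a * (u1 + b - 1) / (u1 + b - 1) = a" using nz by simp
    finally show ?thesis unfolding alpha_hat_def by simp
  qed
  show "\<bar>alpha_hat b u1 u2 - a\<bar> \<le> 10 * t / c"
  proof -
    have "2 * 2 * t / c \<le> 10 * t / c" by (rule divide_right_mono) (use c0 t0 in auto)
    thus ?thesis unfolding B2 by (rule order.trans[OF B1])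
  qed
  define G where "G = u1 + u2 - 2 * u1 * b - (1 - b)^2"
  have Gn: "G = - ((1 - d) * s^2) + ((1 - 2 * b) * e1 + e2)"
    unfolding G_def u1 u2 s_def by algebra
  have b1: "\<bar>1 - 2 * b\<bar> \<le> 1" using a0 b0 ab by linarith
  have Ge: "\<bar>(1 - 2 * b) * e1 + e2\<bar> \<le> 2 * t" using absmul_le[OF b1 e1] e2 by linarith
  have Gge: "\<bar>G\<bar> \<ge> c / 2" using Gn Ge css tc by linarith
  have num2: "(u1^2 - u1 + u2) - d * G = e1 * (2 * (d * s + a) - 1 + e1) + e2 - d * ((1 - 2 * b) * e1 + e2)"
    unfolding Gn unfolding u1 u2 s_def by algebra
  have ds1: "\<bar>2 * (d * s + a) - 1 + e1\<bar> \<le> 2"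
  proof -
    have "0 \<le> d * s" "d * s \<le> s" using d0 d1 s0 by (auto simp: mult_left_le_one_le)
    thus ?thesis using e1 t1 a0 b0 by (simp add: s_def)
  qed
  have "\<bar>e1 * (2 * (d * s + a) - 1 + e1)\<bar> \<le> 2 * t"
  proof -
    have "\<bar>e1 * (2 * (d * s + a) - 1 + e1)\<bar> = \<bar>e1\<bar> * \<bar>2 * (d * s + a) - 1 + e1\<bar>" by (simp add: abs_mult)
    also have "\<dots> \<le> t * 2" by (rule mult_mono) (use e1 ds1 t0 in auto)
    finally show ?thesis by simp
  qed
  moreover have "\<bar>d * ((1 - 2 * b) * e1 + e2)\<bar> \<le> 2 * t"
    by (rule absmul_le) (use d0 d1 Ge in auto)
  ultimately have "\<bar>(u1^2 - u1 + u2) - d * G\<bar> \<le> 5 * t" unfolding num2 using e2 by linarith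
  hence B3: "\<bar>((u1^2 - u1 + u2) - d * G) / G\<bar> \<le> 2 * 5 * t / c"
    by (rule frac_bound) (use Gge c0 t0 in auto)
  have B4: "delta_hat_beta b u1 u2 - d = ((u1^2 - u1 + u2) - d * G) / G"
  proof -
    have nz: "G \<noteq> 0" using Gge c0 by auto
    have "((u1^2 - u1 + u2) - d * G) / G = (u1^2 - u1 + u2) / G - d * G / G"
      by (rule diff_divide_distrib)
    also have "d * G / G = d" using nz by simp
    finally show ?thesis unfolding delta_hat_beta_def G_def by simp
  qed
  show "\<bar>delta_hat_beta b u1 u2 - d\<bar> \<le> 10 * t / c" using B3 unfolding B4 by simp
qed

end



lemma pairs_Suc: "pairs (Suc p) = pairs p \<union> (\<lambda>i. (i, p)) ` {..<p}"
  by (auto simp: pairs_def less_Suc_eq)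

lemma finite_pairs: "finite (pairs p)"
  by (rule finite_subset[of _ "{..<p} \<times> {..<p}"]) (auto simp: pairs_def)

lemma card_pairs: "2 * real (card (pairs p)) = real p * (real p - 1)"
proof (induction p)
  case 0
  then show ?case by (simp add: pairs_def)
next
  case (Suc p)
  have disj: "pairs p \<inter> (\<lambda>i. (i, p)) ` {..<p} = {}" by (auto simp: pairs_def)
  have "card (pairs (Suc p)) = card (pairs p) + card ((\<lambda>i. (i, p)) ` {..<p})"
    unfolding pairs_Suc by (rule card_Un_disjoint) (use disj finite_pairs in auto)
  also have "card ((\<lambda>i. (i, p)) ` {..<p}) = p" by (subst card_image) (auto simp: inj_on_def)
  finally have "card (pairs (Suc p)) = card (pairs p) + p" .
  hence "2 * real (card (pairs (Suc p))) = 2 * real (card (pairs p)) + 2 * real p" by simp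
  also have "\<dots> = real (Suc p) * (real (Suc p) - 1)" using Suc.IH by (simp add: algebra_simps)
  finally show ?case .
qed

lemma card_pairs_pos: "p \<ge> 2 \<Longrightarrow> real (card (pairs p)) > 0"
proof -
  assume "p \<ge> 2"
  hence "real p * (real p - 1) > 0" by simp
  thus ?thesis using card_pairs[of p] by linarith
qed

lemma two_over: "p \<ge> 2 \<Longrightarrow> 2 / (real p * (real p - 1)) = 1 / real (card (pairs p))"
  using card_pairs[of p] card_pairs_pos[of p] by (simp add: field_simps)

lemma one_over: "p \<ge> 2 \<Longrightarrow> 1 / (real p * (real p - 1)) = 1 / (2 * real (card (pairs p)))"
  using card_pairs[of p] by simp

lemma u1_eq: "p \<ge> 2 \<Longrightarrow> u1_hat p A e = (\<Sum>x\<in>pairs p. obs_entry (A (fst x) (snd x)) (e x)) / real (card (pairs p))"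
  unfolding u1_hat_def two_over by (simp add: split_def)

lemma u2_eq: "p \<ge> 2 \<Longrightarrow> u2_hat p A e es = (\<Sum>x\<in>pairs p. \<bar>obs_entry (A (fst x) (snd x)) (es x) - obs_entry (A (fst x) (snd x)) (e x)\<bar> / 2) / real (card (pairs p))"
  unfolding u2_hat_def one_over by (simp add: split_def sum_divide_distrib[symmetric])

lemma dens_eq: "p \<ge> 2 \<Longrightarrow> edge_density p A = (\<Sum>x\<in>pairs p. A (fst x) (snd x)) / real (card (pairs p))"
  unfolding edge_density_def two_over by (simp add: split_def)

lemma obs_bnd: "A \<in> {0,1} \<Longrightarrow> obs_entry A e \<in> {0..1}"
  by (auto simp: obs_entry_def)

lemma dev:
  fixes A :: "nat \<Rightarrow> nat \<Rightarrow> real" and a b t :: real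
  assumes p2: "p \<ge> 2" and A01: "\<And>i j. i < p \<Longrightarrow> j < p \<Longrightarrow> A i j \<in> {0,1}"
    and a0: "a \<ge> 0" and b0: "b \<ge> 0" and ab: "a + b \<le> 1" and t0: "t \<ge> 0"
  shows "measure_pmf.prob (noise_model p a b)
     {\<omega>. \<bar>u1_hat p A (fst \<omega>) - (edge_density p A * (1 - a - b) + a)\<bar> \<ge> t \<or>
         \<bar>u2_hat p A (fst \<omega>) (snd \<omega>) - (edge_density p A * (b * (1 - b)) + (1 - edge_density p A) * (a * (1 - a)))\<bar> \<ge> t}
     \<le> 4 * exp (-2 * (real p * (real p - 1) / 2) * t\<^sup>2)"
proof -
  define S where "S = pairs p"
  define n where "n = real (card S)"
  define Q where "Q = pair_pmf (noise_pmf a b) (noise_pmf a b)"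
  define M where "M = Pi_pmf S (0::int, 0::int) (\<lambda>_. Q)"
  define H :: "((nat \<times> nat) \<Rightarrow> int \<times> int) \<Rightarrow> _" where "H = (\<lambda>f. (\<lambda>i. fst (f i), \<lambda>i. snd (f i)))"
  define h1 where "h1 = (\<lambda>x::nat\<times>nat. \<lambda>y::int\<times>int. obs_entry (A (fst x) (snd x)) (fst y))"
  define h2 where "h2 = (\<lambda>x::nat\<times>nat. \<lambda>y::int\<times>int. \<bar>obs_entry (A (fst x) (snd x)) (snd y) - obs_entry (A (fst x) (snd x)) (fst y)\<bar> / 2)"
  have fin: "finite S" by (simp add: S_def finite_pairs)
  have npos: "n > 0" using card_pairs_pos[OF p2] by (simp add: n_def S_def)
  have ne: "S \<noteq> {}" using npos by (auto simp: n_def)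
  have nval: "n = real p * (real p - 1) / 2" using card_pairs[of p] by (simp add: n_def S_def)
  have AS: "A (fst x) (snd x) \<in> {0,1}" if "x \<in> S" for x
  proof -
    have "fst x < p" "snd x < p" using that by (auto simp: S_def pairs_def)
    thus ?thesis using A01 by blast
  qed
  have NM: "noise_model p a b = map_pmf H M"
    unfolding noise_model_def M_def H_def Q_def S_def by (rule pair_Pi_pmf[OF finite_pairs])
  have bnd1: "h1 x y \<in> {0..1}" if "x \<in> S" for x y
    using obs_bnd[OF AS[OF that]] by (simp add: h1_def)
  have bnd2: "h2 x y \<in> {0..1}" if "x \<in> S" for x y
    using obs_bnd[OF AS[OF that], of "fst y"] obs_bnd[OF AS[OF that], of "snd y"] by (auto simp: h2_def)
  define sA where "sA = (\<Sum>x\<in>S. A (fst x) (snd x))"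
  have dens: "edge_density p A = sA / n" using dens_eq[OF p2] by (simp add: sA_def n_def S_def)
  have m1: "(\<Sum>x\<in>S. measure_pmf.expectation Q (h1 x)) / n = edge_density p A * (1 - a - b) + a"
  proof -
    have "(\<Sum>x\<in>S. measure_pmf.expectation Q (h1 x)) = (\<Sum>x\<in>S. A (fst x) (snd x) * (1 - a - b) + a)"
    proof (rule sum.cong[OF refl])
      fix x assume "x \<in> S"
      show "measure_pmf.expectation Q (h1 x) = A (fst x) (snd x) * (1 - a - b) + a"
        unfolding h1_def Q_def by (rule E1[OF a0 b0 ab AS[OF \<open>x \<in> S\<close>]])
    qed
    also have "\<dots> = sA * (1 - a - b) + n * a" by (simp add: sum.distrib sum_distrib_right sA_def n_def)
    finally show ?thesis using npos by (simp add: dens field_simps)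
  qed
  have m2: "(\<Sum>x\<in>S. measure_pmf.expectation Q (h2 x)) / n = edge_density p A * (b * (1 - b)) + (1 - edge_density p A) * (a * (1 - a))"
  proof -
    have "(\<Sum>x\<in>S. measure_pmf.expectation Q (h2 x)) = (\<Sum>x\<in>S. A (fst x) (snd x) * (b * (1 - b)) + (1 - A (fst x) (snd x)) * (a * (1 - a)))"
    proof (rule sum.cong[OF refl])
      fix x assume "x \<in> S"
      show "measure_pmf.expectation Q (h2 x) = A (fst x) (snd x) * (b * (1 - b)) + (1 - A (fst x) (snd x)) * (a * (1 - a))"
        unfolding h2_def Q_def by (rule E2[OF a0 b0 ab AS[OF \<open>x \<in> S\<close>]])
    qed
    also have "\<dots> = sA * (b * (1 - b)) + (n - sA) * (a * (1 - a))"
    proof -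
      have "(\<Sum>x\<in>S. (1 - A (fst x) (snd x)) * (a * (1 - a))) = (\<Sum>x\<in>S. (1 - A (fst x) (snd x))) * (a * (1 - a))"
        by (rule sum_distrib_right[symmetric])
      also have "(\<Sum>x\<in>S. (1 - A (fst x) (snd x))) = n - sA" by (simp add: sum_subtractf sA_def n_def)
      finally show ?thesis by (simp add: sum.distrib sum_distrib_right sA_def)
    qed
    finally have eq: "(\<Sum>x\<in>S. measure_pmf.expectation Q (h2 x)) = sA * (b * (1 - b)) + (n - sA) * (a * (1 - a))" .
    show ?thesis unfolding eq dens using npos by (simp add: field_simps)
  qed
  have u1: "u1_hat p A (fst (H f)) = (\<Sum>x\<in>S. h1 x (f x)) / n" for f
    using u1_eq[OF p2] by (simp add: H_def h1_def S_def n_def)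
  have u2: "u2_hat p A (fst (H f)) (snd (H f)) = (\<Sum>x\<in>S. h2 x (f x)) / n" for f
    using u2_eq[OF p2] by (simp add: H_def h2_def S_def n_def)
  define E1s where "E1s = {f. \<bar>(\<Sum>x\<in>S. h1 x (f x)) / card S - (\<Sum>x\<in>S. measure_pmf.expectation Q (h1 x)) / card S\<bar> \<ge> t}"
  define E2s where "E2s = {f. \<bar>(\<Sum>x\<in>S. h2 x (f x)) / card S - (\<Sum>x\<in>S. measure_pmf.expectation Q (h2 x)) / card S\<bar> \<ge> t}"
  have P1: "measure_pmf.prob M E1s \<le> 2 * exp (-2 * n * t\<^sup>2)"
    unfolding E1s_def M_def n_def by (rule hoeff[OF fin ne bnd1 t0])
  have P2: "measure_pmf.prob M E2s \<le> 2 * exp (-2 * n * t\<^sup>2)"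
    unfolding E2s_def M_def n_def by (rule hoeff[OF fin ne bnd2 t0])
  have "H -` {\<omega>. \<bar>u1_hat p A (fst \<omega>) - (edge_density p A * (1 - a - b) + a)\<bar> \<ge> t \<or>
         \<bar>u2_hat p A (fst \<omega>) (snd \<omega>) - (edge_density p A * (b * (1 - b)) + (1 - edge_density p A) * (a * (1 - a)))\<bar> \<ge> t}
       = E1s \<union> E2s"
    unfolding E1s_def E2s_def by (auto simp: u1 u2 m1[symmetric] m2[symmetric] n_def)
  hence "measure_pmf.prob (noise_model p a b)
     {\<omega>. \<bar>u1_hat p A (fst \<omega>) - (edge_density p A * (1 - a - b) + a)\<bar> \<ge> t \<or>
         \<bar>u2_hat p A (fst \<omega>) (snd \<omega>) - (edge_density p A * (b * (1 - b)) + (1 - edge_density p A) * (a * (1 - a)))\<bar> \<ge> t}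
     = measure_pmf.prob M (E1s \<union> E2s)" unfolding NM by simp
  also have "\<dots> \<le> measure_pmf.prob M E1s + measure_pmf.prob M E2s" by (rule measure_Un_le) auto
  also have "\<dots> \<le> 4 * exp (-2 * n * t\<^sup>2)" using P1 P2 by linarith
  finally show ?thesis by (simp add: nval)
qed



lemma r_lim: "((\<lambda>p::nat. (real p * (real p - 1) / 2) powr (-1/2)) \<longlongrightarrow> 0) sequentially"
  by real_asymp

lemma exp_bound: "(x::real) > 0 \<Longrightarrow> exp (- x) \<le> 1 / x"
proof -
  assume x: "x > 0"
  have "x \<le> exp x" using exp_ge_add_one_self[of x] by linarith
  hence "1 / exp x \<le> 1 / x" using x by (intro divide_left_mono) auto
  thus ?thesis by (simp add: exp_minus field_simps)
qed

lemma main_gen: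
  fixes M :: "nat \<Rightarrow> 'a pmf" and X :: "nat \<Rightarrow> 'a \<Rightarrow> real" and c :: real
  assumes c0: "c > 0"
    and key: "\<And>p t. p \<ge> 2 \<Longrightarrow> cond p \<Longrightarrow> 0 \<le> t \<Longrightarrow> t \<le> c / 8 \<Longrightarrow>
       measure_pmf.prob (M p) {\<omega>. \<bar>X p \<omega>\<bar> > 10 * t / c} \<le> 4 * exp (-2 * (real p * (real p - 1) / 2) * t\<^sup>2)"
    and ev: "eventually cond sequentially"
  shows "bigOp M X (\<lambda>p. (real p * (real p - 1) / 2) powr (-1/2))"
  unfolding bigOp_def
proof (intro allI impI)
  fix e :: real assume e: "e > 0"
  define K0 where "K0 = 1 + 2 / e"
  have K0: "K0 \<ge> 1" "K0 \<ge> 2 / e" using e by (auto simp: K0_def)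
  define r where "r = (\<lambda>p::nat. (real p * (real p - 1) / 2) powr (-1/2))"
  have "eventually (\<lambda>p. r p < c / (8 * K0)) sequentially"
    using r_lim[unfolded r_def[symmetric]] c0 K0 by (intro order_tendstoD) auto
  moreover have "eventually (\<lambda>p. p \<ge> 2) sequentially" by (rule eventually_ge_at_top)
  ultimately have evall: "eventually (\<lambda>p. r p < c / (8 * K0) \<and> p \<ge> 2 \<and> cond p) sequentially"
    using ev by eventually_elim auto
  show "\<exists>K>0. eventually (\<lambda>p. measure_pmf.prob (M p) {\<omega>. \<bar>X p \<omega>\<bar> > K * r p} \<le> e) sequentially"
  proof (intro exI conjI)
    show "10 * K0 / c > 0" using K0 c0 by auto
    show "eventually (\<lambda>p. measure_pmf.prob (M p) {\<omega>. \<bar>X p \<omega>\<bar> > 10 * K0 / c * r p} \<le> e) sequentially"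
      using evall
    proof eventually_elim
      case (elim p)
      define N where "N = real p * (real p - 1) / 2"
      have Npos: "N > 0" using elim by (simp add: N_def)
      define t where "t = K0 * r p"
      have r0: "r p \<ge> 0" by (simp add: r_def)
      have t0: "t \<ge> 0" using r0 K0 by (simp add: t_def)
      have tc: "t \<le> c / 8"
      proof -
        have "t < K0 * (c / (8 * K0))" unfolding t_def using elim K0 by (intro mult_strict_left_mono) auto
        thus ?thesis using K0 by simp
      qed
      have rr: "(r p)\<^sup>2 = 1 / N"
      proof -
        have "(r p)\<^sup>2 = N powr (-1/2) * N powr (-1/2)" by (simp add: r_def N_def power2_eq_square)
        also have "\<dots> = N powr (-1)" using Npos by (simp flip: powr_add)
        also have "\<dots> = 1 / N" using Npos by (simp add: powr_minus_divide)
        finally show ?thesis .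
      qed
      have Nt: "N * t\<^sup>2 = K0\<^sup>2" unfolding t_def power_mult_distrib rr using Npos by simp
      have "{\<omega>. \<bar>X p \<omega>\<bar> > 10 * K0 / c * r p} = {\<omega>. \<bar>X p \<omega>\<bar> > 10 * t / c}"
        by (simp add: t_def mult.assoc)
      hence "measure_pmf.prob (M p) {\<omega>. \<bar>X p \<omega>\<bar> > 10 * K0 / c * r p} \<le> 4 * exp (-2 * N * t\<^sup>2)"
        using key[of p t] elim t0 tc by (simp add: N_def)
      also have "-2 * N * t\<^sup>2 = - (2 * K0\<^sup>2)" using Nt by simp
      also have "4 * exp (- (2 * K0\<^sup>2)) \<le> 4 * (1 / (2 * K0\<^sup>2))"
        using K0 by (intro mult_left_mono exp_bound) auto
      also have "\<dots> \<le> e"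
      proof -
        have "K0 \<le> K0\<^sup>2" using K0 by (simp add: power2_eq_square)
        hence "2 / e \<le> K0\<^sup>2" using K0 by linarith
        hence "2 \<le> e * K0\<^sup>2" using e by (simp add: field_simps)
        thus ?thesis using K0 e by (simp add: field_simps)
      qed
      finally show ?case .
    qed
  qed
qed


theorem proposition1:
  fixes A :: "nat \<Rightarrow> nat \<Rightarrow> nat \<Rightarrow> real"
    and \<alpha> \<beta> :: "nat \<Rightarrow> real"
  assumes A01: "\<And>p i j. i < p \<Longrightarrow> j < p \<Longrightarrow> A p i j \<in> {0, 1}"
    and Asym: "\<And>p i j. i < p \<Longrightarrow> j < p \<Longrightarrow> A p i j = A p j i"
    and Adiag: "\<And>p i. i < p \<Longrightarrow> A p i i = 0"
    and alpha_nn: "\<And>p. \<alpha> p \<ge> 0"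
    and beta_nn: "\<And>p. \<beta> p \<ge> 0"
    and ab_le: "\<And>p. \<alpha> p + \<beta> p \<le> 1"
    and N1: "filterlim (\<lambda>p. real p * (real p - 1) * edge_density p (A p)) at_top sequentially"
    and N2: "filterlim (\<lambda>p. real p * (real p - 1) * (1 - edge_density p (A p))) at_top sequentially"
  shows
   "((\<exists>c>0. eventually (\<lambda>p. edge_density p (A p) * (1 - \<alpha> p - \<beta> p)^2 \<ge> c) sequentially) \<longrightarrow>
       bigOp (\<lambda>p. noise_model p (\<alpha> p) (\<beta> p))
         (\<lambda>p \<omega>. beta_hat (\<alpha> p) (u1_hat p (A p) (fst \<omega>)) (u2_hat p (A p) (fst \<omega>) (snd \<omega>)) - \<beta> p)
         (\<lambda>p. (real p * (real p - 1) / 2) powr (-1/2))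
     \<and> bigOp (\<lambda>p. noise_model p (\<alpha> p) (\<beta> p))
         (\<lambda>p \<omega>. delta_hat_alpha (\<alpha> p) (u1_hat p (A p) (fst \<omega>)) (u2_hat p (A p) (fst \<omega>) (snd \<omega>))
                  - edge_density p (A p))
         (\<lambda>p. (real p * (real p - 1) / 2) powr (-1/2)))
    \<and>
    ((\<exists>c>0. eventually (\<lambda>p. (1 - edge_density p (A p)) * (1 - \<alpha> p - \<beta> p)^2 \<ge> c) sequentially) \<longrightarrow>
       bigOp (\<lambda>p. noise_model p (\<alpha> p) (\<beta> p))
         (\<lambda>p \<omega>. alpha_hat (\<beta> p) (u1_hat p (A p) (fst \<omega>)) (u2_hat p (A p) (fst \<omega>) (snd \<omega>)) - \<alpha> p)
         (\<lambda>p. (real p * (real p - 1) / 2) powr (-1/2))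
     \<and> bigOp (\<lambda>p. noise_model p (\<alpha> p) (\<beta> p))
         (\<lambda>p \<omega>. delta_hat_beta (\<beta> p) (u1_hat p (A p) (fst \<omega>)) (u2_hat p (A p) (fst \<omega>) (snd \<omega>))
                  - edge_density p (A p))
         (\<lambda>p. (real p * (real p - 1) / 2) powr (-1/2)))"
  proof -
  have dens01: "0 \<le> edge_density p (A p) \<and> edge_density p (A p) \<le> 1" if p2: "p \<ge> 2" for p
  proof -
    have Ap: "A p (fst x) (snd x) \<in> {0,1}" if "x \<in> pairs p" for x
    proof -
      have "fst x < p" "snd x < p" using that by (auto simp: pairs_def)
      thus ?thesis using A01 by blast
    qed
    have Ap01: "0 \<le> A p (fst x) (snd x) \<and> A p (fst x) (snd x) \<le> 1" if "x \<in> pairs p" for x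
      using Ap[OF that] by auto
    have s0: "0 \<le> (\<Sum>x\<in>pairs p. A p (fst x) (snd x))" using Ap01 by (intro sum_nonneg) blast
    have "(\<Sum>x\<in>pairs p. A p (fst x) (snd x)) \<le> (\<Sum>x\<in>pairs p. 1)" using Ap01 by (intro sum_mono) blast
    hence s1: "(\<Sum>x\<in>pairs p. A p (fst x) (snd x)) \<le> real (card (pairs p))" by simp
    have np: "real (card (pairs p)) > 0" by (rule card_pairs_pos[OF p2])
    show ?thesis unfolding dens_eq[OF p2] using s0 s1 np by (simp add: divide_le_eq_1)
  qed
  define M where "M = (\<lambda>p. noise_model p (\<alpha> p) (\<beta> p))"
  define Dev where "Dev = (\<lambda>p t. {\<omega>. \<bar>u1_hat p (A p) (fst \<omega>) - (edge_density p (A p) * (1 - \<alpha> p - \<beta> p) + \<alpha> p)\<bar> \<ge> t \<or>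
         \<bar>u2_hat p (A p) (fst \<omega>) (snd \<omega>) - (edge_density p (A p) * (\<beta> p * (1 - \<beta> p)) + (1 - edge_density p (A p)) * (\<alpha> p * (1 - \<alpha> p)))\<bar> \<ge> t})"
  have devb: "measure_pmf.prob (M p) (Dev p t) \<le> 4 * exp (-2 * (real p * (real p - 1) / 2) * t\<^sup>2)"
    if "p \<ge> 2" "t \<ge> 0" for p t
    unfolding M_def Dev_def by (rule dev) (use that A01 alpha_nn beta_nn ab_le in auto)
  have keyg: "measure_pmf.prob (M p) {\<omega>. \<bar>Z \<omega>\<bar> > 10 * t / c} \<le> 4 * exp (-2 * (real p * (real p - 1) / 2) * t\<^sup>2)"
    if "p \<ge> 2" "t \<ge> 0"
      and det: "\<And>\<omega>. \<bar>u1_hat p (A p) (fst \<omega>) - (edge_density p (A p) * (1 - \<alpha> p - \<beta> p) + \<alpha> p)\<bar> \<le> t \<Longrightarrow>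
         \<bar>u2_hat p (A p) (fst \<omega>) (snd \<omega>) - (edge_density p (A p) * (\<beta> p * (1 - \<beta> p)) + (1 - edge_density p (A p)) * (\<alpha> p * (1 - \<alpha> p)))\<bar> \<le> t
         \<Longrightarrow> \<bar>Z \<omega>\<bar> \<le> 10 * t / c"
    for p t Z c
  proof -
    have "{\<omega>. \<bar>Z \<omega>\<bar> > 10 * t / c} \<subseteq> Dev p t"
    proof
      fix \<omega> assume "\<omega> \<in> {\<omega>. \<bar>Z \<omega>\<bar> > 10 * t / c}"
      hence "\<not> \<bar>Z \<omega>\<bar> \<le> 10 * t / c" by simp
      thus "\<omega> \<in> Dev p t" unfolding Dev_def using det[of \<omega>] by force
    qed
    hence "measure_pmf.prob (M p) {\<omega>. \<bar>Z \<omega>\<bar> > 10 * t / c} \<le> measure_pmf.prob (M p) (Dev p t)"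
      by (intro measure_pmf.finite_measure_mono) auto
    also have "\<dots> \<le> 4 * exp (-2 * (real p * (real p - 1) / 2) * t\<^sup>2)" by (rule devb) (use that in auto)
    finally show ?thesis .
  qed
  have part1: "bigOp M
         (\<lambda>p \<omega>. beta_hat (\<alpha> p) (u1_hat p (A p) (fst \<omega>)) (u2_hat p (A p) (fst \<omega>) (snd \<omega>)) - \<beta> p)
         (\<lambda>p. (real p * (real p - 1) / 2) powr (-1/2))
     \<and> bigOp M
         (\<lambda>p \<omega>. delta_hat_alpha (\<alpha> p) (u1_hat p (A p) (fst \<omega>)) (u2_hat p (A p) (fst \<omega>) (snd \<omega>))
                  - edge_density p (A p))
         (\<lambda>p. (real p * (real p - 1) / 2) powr (-1/2))"
    if ex: "\<exists>c>0. eventually (\<lambda>p. edge_density p (A p) * (1 - \<alpha> p - \<beta> p)^2 \<ge> c) sequentially"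
  proof -
    obtain c where c0: "c > 0" and ev: "eventually (\<lambda>p. edge_density p (A p) * (1 - \<alpha> p - \<beta> p)^2 \<ge> c) sequentially"
      using ex by blast
    show ?thesis
    proof (intro conjI main_gen[OF c0 _ ev])
      fix p t assume p2: "p \<ge> 2" and cd: "edge_density p (A p) * (1 - \<alpha> p - \<beta> p)^2 \<ge> c" and t0: "0 \<le> t" and tc: "t \<le> c / 8"
      note d = dens01[OF p2]
      show "measure_pmf.prob (M p) {\<omega>. \<bar>beta_hat (\<alpha> p) (u1_hat p (A p) (fst \<omega>)) (u2_hat p (A p) (fst \<omega>) (snd \<omega>)) - \<beta> p\<bar> > 10 * t / c}
          \<le> 4 * exp (-2 * (real p * (real p - 1) / 2) * t\<^sup>2)"
        by (rule keyg[OF p2 t0]) (rule det_alpha_known(1)[OF alpha_nn beta_nn ab_le conjunct1[OF d] conjunct2[OF d] c0 t0 tc _ _ cd])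
      show "measure_pmf.prob (M p) {\<omega>. \<bar>delta_hat_alpha (\<alpha> p) (u1_hat p (A p) (fst \<omega>)) (u2_hat p (A p) (fst \<omega>) (snd \<omega>)) - edge_density p (A p)\<bar> > 10 * t / c}
          \<le> 4 * exp (-2 * (real p * (real p - 1) / 2) * t\<^sup>2)"
        by (rule keyg[OF p2 t0]) (rule det_alpha_known(2)[OF alpha_nn beta_nn ab_le conjunct1[OF d] conjunct2[OF d] c0 t0 tc _ _ cd])
    qed
  qed
  have part2: "bigOp M
         (\<lambda>p \<omega>. alpha_hat (\<beta> p) (u1_hat p (A p) (fst \<omega>)) (u2_hat p (A p) (fst \<omega>) (snd \<omega>)) - \<alpha> p)
         (\<lambda>p. (real p * (real p - 1) / 2) powr (-1/2))
     \<and> bigOp M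
         (\<lambda>p \<omega>. delta_hat_beta (\<beta> p) (u1_hat p (A p) (fst \<omega>)) (u2_hat p (A p) (fst \<omega>) (snd \<omega>))
                  - edge_density p (A p))
         (\<lambda>p. (real p * (real p - 1) / 2) powr (-1/2))"
    if ex: "\<exists>c>0. eventually (\<lambda>p. (1 - edge_density p (A p)) * (1 - \<alpha> p - \<beta> p)^2 \<ge> c) sequentially"
  proof -
    obtain c where c0: "c > 0" and ev: "eventually (\<lambda>p. (1 - edge_density p (A p)) * (1 - \<alpha> p - \<beta> p)^2 \<ge> c) sequentially"
      using ex by blast
    show ?thesis
    proof (intro conjI main_gen[OF c0 _ ev])
      fix p t assume p2: "p \<ge> 2" and cd: "(1 - edge_density p (A p)) * (1 - \<alpha> p - \<beta> p)^2 \<ge> c" and t0: "0 \<le> t" and tc: "t \<le> c / 8"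
      note d = dens01[OF p2]
      show "measure_pmf.prob (M p) {\<omega>. \<bar>alpha_hat (\<beta> p) (u1_hat p (A p) (fst \<omega>)) (u2_hat p (A p) (fst \<omega>) (snd \<omega>)) - \<alpha> p\<bar> > 10 * t / c}
          \<le> 4 * exp (-2 * (real p * (real p - 1) / 2) * t\<^sup>2)"
        by (rule keyg[OF p2 t0]) (rule det_beta_known(1)[OF alpha_nn beta_nn ab_le conjunct1[OF d] conjunct2[OF d] c0 t0 tc _ _ cd])
      show "measure_pmf.prob (M p) {\<omega>. \<bar>delta_hat_beta (\<beta> p) (u1_hat p (A p) (fst \<omega>)) (u2_hat p (A p) (fst \<omega>) (snd \<omega>)) - edge_density p (A p)\<bar> > 10 * t / c}
          \<le> 4 * exp (-2 * (real p * (real p - 1) / 2) * t\<^sup>2)"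
        by (rule keyg[OF p2 t0]) (rule det_beta_known(2)[OF alpha_nn beta_nn ab_le conjunct1[OF d] conjunct2[OF d] c0 t0 tc _ _ cd])
    qed
  qed
  show ?thesis using part1 part2 unfolding M_def by blast
qed

end
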